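(* Let $\mathcal{C}$ be a non-attacking configuration with $e$ even Queens and $o$ odd Queens. Then there exists $N$ such that for all $n\ge N$, $$\mathrm{inloss}_n(\mathcal{C}) = \gamma(\mathcal{C}) - \eta_n(\mathcal{C}),$$ where $\gamma(\mathcal{C}) = 12\binom{e}{2} + 12\binom{o}{2} + 10\,e\,o$ and $\eta_n(\mathcal{C}) = \sum_{s\in A(\mathcal{C})\cap\mathcal{B}_n}\left[\binom{a_{\mathcal{C}}(s)}{2} - (a_{\mathcal{C}}(s)-1)\right]$.
   Context: For $n \in \mathbb{N}$ let $I_n = \{\lfloor (2-n)/2 \rfloor, \ldots, \lfloor n/2 \rfloor\}$ and $\mathcal{B}_n = I_n \times I_n$. A configuration is a finite set $\mathcal{C} \subset \mathbb{Z}\times\mathbb{Z}$. For $Q=(x,y)$, $A(Q) = \{(x+i,y),(x,y+i),(x+i,y+i),(x+i,y-i) : i \in \mathbb{Z}\setminus\{0\}\}$ and $A(\mathcal{C}) = \bigcup_{Q\in\mathcal{C}} A(Q)$. $\mathcal{C}$ is non-attacking if $Q'\notin A(Q)$ for all distinct $Q,Q'\in\mathcal{C}$. The attacking number is $a_{\mathcal{C}}(s) = \#\{Q \in \mathcal{C} : s \in A(Q)\}$ and $\mathrm{inloss}_n(\mathcal{C}) = \sum_{s \in A(\mathcal{C})\cap\mathcal{B}_n} (a_{\mathcal{C}}(s) - 1)$. A Queen at $(x_1,x_2)$ is even if $x_1-x_2\equiv 0 \pmod 2$ and odd otherwise. *)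

theory Defs
  imports Main
begin

type_synonym square = "int \<times> int"

definition I_int :: "nat \<Rightarrow> int set" where
  "I_int n = {(2 - int n) div 2 .. int n div 2}"

definition board :: "nat \<Rightarrow> square set" where
  "board n = I_int n \<times> I_int n"

definition attacks :: "square \<Rightarrow> square set" where
  "attacks Q = (case Q of (x, y) \<Rightarrow>
     {(x + i, y) | i. i \<noteq> 0} \<union> {(x, y + i) | i. i \<noteq> 0} \<union>
     {(x + i, y + i) | i. i \<noteq> 0} \<union> {(x + i, y - i) | i. i \<noteq> 0})"

definition attacked :: "square set \<Rightarrow> square set" where
  "attacked C = (\<Union>Q\<in>C. attacks Q)"

definition non_attacking :: "square set \<Rightarrow> bool" where
  "non_attacking C \<longleftrightarrow> (\<forall>Q\<in>C. \<forall>Q'\<in>C. Q \<noteq> Q' \<longrightarrow> Q' \<notin> attacks Q)"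

definition attacking_number :: "square set \<Rightarrow> square \<Rightarrow> nat" where
  "attacking_number C s = card {Q \<in> C. s \<in> attacks Q}"

definition inloss :: "nat \<Rightarrow> square set \<Rightarrow> int" where
  "inloss n C = (\<Sum>s\<in>attacked C \<inter> board n. int (attacking_number C s) - 1)"

definition even_queen :: "square \<Rightarrow> bool" where
  "even_queen Q \<longleftrightarrow> even (fst Q - snd Q)"

definition gamma :: "square set \<Rightarrow> int" where
  "gamma C = (let e = card {Q \<in> C. even_queen Q}; od = card {Q \<in> C. \<not> even_queen Q} in
     12 * int (e choose 2) + 12 * int (od choose 2) + 10 * int e * int od)"

definition eta :: "nat \<Rightarrow> square set \<Rightarrow> int" where
  "eta n C = (\<Sum>s\<in>attacked C \<inter> board n.
     int (attacking_number C s choose 2) - (int (attacking_number C s) - 1))"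

end

theory Submission
  imports Defs
begin


lemma attacks_char: "attacks (x,y) = {(a,b). (a,b) \<noteq> (x,y) \<and> (b = y \<or> a = x \<or> a-b = x-y \<or> a+b = x+y)}"
proof (rule set_eqI, clarify)
  fix a b
  have 1: "(a,b) \<in> attacks (x,y)" if ne: "(a,b) \<noteq> (x,y)" and h: "b = y \<or> a = x \<or> a-b = x-y \<or> a+b = x+y"
  proof -
    consider "b = y" | "a = x" | "a-b = x-y" | "a+b = x+y" using h by blast
    then show ?thesis
    proof cases
      case 1 then have "(a,b) = (x + (a-x), y) \<and> a - x \<noteq> 0" using ne by auto
      then show ?thesis unfolding attacks_def by blast
    next
      case 2 then have "(a,b) = (x, y + (b-y)) \<and> b - y \<noteq> 0" using ne by auto
      then show ?thesis unfolding attacks_def by blast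
    next
      case 3 then have "(a,b) = (x + (a-x), y + (a-x)) \<and> a - x \<noteq> 0" using ne by auto
      then show ?thesis unfolding attacks_def by blast
    next
      case 4 then have "(a,b) = (x + (a-x), y - (a-x)) \<and> a - x \<noteq> 0" using ne by auto
      then show ?thesis unfolding attacks_def by blast
    qed
  qed
  have 2: "(a,b) \<noteq> (x,y) \<and> (b = y \<or> a = x \<or> a-b = x-y \<or> a+b = x+y)" if "(a,b) \<in> attacks (x,y)"
    using that unfolding attacks_def by auto
  show "((a,b) \<in> attacks (x,y)) = ((a,b) \<in> {(a,b). (a,b) \<noteq> (x,y) \<and> (b = y \<or> a = x \<or> a-b = x-y \<or> a+b = x+y)})"
    using 1 2 by blast
qed


lemma mem_pair: "a = A \<Longrightarrow> b = B \<Longrightarrow> (A, B) \<in> S \<Longrightarrow> (a, b) \<in> S" by simp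

lemma set_even:
  fixes x y u v k a b :: int
  assumes "v \<noteq> y" "u \<noteq> x" "u - v \<noteq> x - y" "u + v \<noteq> x + y" "x - y + u + v = 2*k"
  shows "((b = y \<or> a = x \<or> a - b = x - y \<or> a + b = x + y) \<and> (b = v \<or> a = u \<or> a - b = u - v \<or> a + b = u + v)) \<longleftrightarrow> (a, b) \<in> set [(u, y), (u-v+y, y), (u+v-y, y), (x, v), (x, x-u+v), (x, u+v-x), (x-y+v, v), (u, u-x+y), (k, u+v-k), (x+y-v, v), (u, x+y-u), (k+y-v, x-k+v)]"
proof
  assume hh: "(b = y \<or> a = x \<or> a - b = x - y \<or> a + b = x + y) \<and> (b = v \<or> a = u \<or> a - b = u - v \<or> a + b = u + v)"
  have c1: "b = y \<Longrightarrow> b = v \<Longrightarrow> False"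
    using assms(1-4) by linarith
  have c2: "(a, b) \<in> set [(u, y), (u-v+y, y), (u+v-y, y), (x, v), (x, x-u+v), (x, u+v-x), (x-y+v, v), (u, u-x+y), (k, u+v-k), (x+y-v, v), (u, x+y-u), (k+y-v, x-k+v)]" if "b = y" "a = u" for a b
  proof -
    have "a = u" "b = y" using that assms by linarith+
    then show ?thesis by simp
  qed
  have c3: "(a, b) \<in> set [(u, y), (u-v+y, y), (u+v-y, y), (x, v), (x, x-u+v), (x, u+v-x), (x-y+v, v), (u, u-x+y), (k, u+v-k), (x+y-v, v), (u, x+y-u), (k+y-v, x-k+v)]" if "b = y" "a - b = u - v" for a b
  proof -
    have "a = u-v+y" "b = y" using that assms by linarith+
    then show ?thesis by simp
  qed
  have c4: "(a, b) \<in> set [(u, y), (u-v+y, y), (u+v-y, y), (x, v), (x, x-u+v), (x, u+v-x), (x-y+v, v), (u, u-x+y), (k, u+v-k), (x+y-v, v), (u, x+y-u), (k+y-v, x-k+v)]" if "b = y" "a + b = u + v" for a b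
  proof -
    have "a = u+v-y" "b = y" using that assms by linarith+
    then show ?thesis by simp
  qed
  have c5: "(a, b) \<in> set [(u, y), (u-v+y, y), (u+v-y, y), (x, v), (x, x-u+v), (x, u+v-x), (x-y+v, v), (u, u-x+y), (k, u+v-k), (x+y-v, v), (u, x+y-u), (k+y-v, x-k+v)]" if "a = x" "b = v" for a b
  proof -
    have "a = x" "b = v" using that assms by linarith+
    then show ?thesis by simp
  qed
  have c6: "a = x \<Longrightarrow> a = u \<Longrightarrow> False"
    using assms(1-4) by linarith
  have c7: "(a, b) \<in> set [(u, y), (u-v+y, y), (u+v-y, y), (x, v), (x, x-u+v), (x, u+v-x), (x-y+v, v), (u, u-x+y), (k, u+v-k), (x+y-v, v), (u, x+y-u), (k+y-v, x-k+v)]" if "a = x" "a - b = u - v" for a b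
  proof -
    have "a = x" "b = x-u+v" using that assms by linarith+
    then show ?thesis by simp
  qed
  have c8: "(a, b) \<in> set [(u, y), (u-v+y, y), (u+v-y, y), (x, v), (x, x-u+v), (x, u+v-x), (x-y+v, v), (u, u-x+y), (k, u+v-k), (x+y-v, v), (u, x+y-u), (k+y-v, x-k+v)]" if "a = x" "a + b = u + v" for a b
  proof -
    have "a = x" "b = u+v-x" using that assms by linarith+
    then show ?thesis by simp
  qed
  have c9: "(a, b) \<in> set [(u, y), (u-v+y, y), (u+v-y, y), (x, v), (x, x-u+v), (x, u+v-x), (x-y+v, v), (u, u-x+y), (k, u+v-k), (x+y-v, v), (u, x+y-u), (k+y-v, x-k+v)]" if "a - b = x - y" "b = v" for a b
  proof -
    have "a = x-y+v" "b = v" using that assms by linarith+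
    then show ?thesis by simp
  qed
  have c10: "(a, b) \<in> set [(u, y), (u-v+y, y), (u+v-y, y), (x, v), (x, x-u+v), (x, u+v-x), (x-y+v, v), (u, u-x+y), (k, u+v-k), (x+y-v, v), (u, x+y-u), (k+y-v, x-k+v)]" if "a - b = x - y" "a = u" for a b
  proof -
    have "a = u" "b = u-x+y" using that assms by linarith+
    then show ?thesis by simp
  qed
  have c11: "a - b = x - y \<Longrightarrow> a - b = u - v \<Longrightarrow> False"
    using assms(1-4) by linarith
  have c12: "(a, b) \<in> set [(u, y), (u-v+y, y), (u+v-y, y), (x, v), (x, x-u+v), (x, u+v-x), (x-y+v, v), (u, u-x+y), (k, u+v-k), (x+y-v, v), (u, x+y-u), (k+y-v, x-k+v)]" if "a - b = x - y" "a + b = u + v" for a b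
  proof -
    have "a = k" "b = u+v-k" using that assms by linarith+
    then show ?thesis by simp
  qed
  have c13: "(a, b) \<in> set [(u, y), (u-v+y, y), (u+v-y, y), (x, v), (x, x-u+v), (x, u+v-x), (x-y+v, v), (u, u-x+y), (k, u+v-k), (x+y-v, v), (u, x+y-u), (k+y-v, x-k+v)]" if "a + b = x + y" "b = v" for a b
  proof -
    have "a = x+y-v" "b = v" using that assms by linarith+
    then show ?thesis by simp
  qed
  have c14: "(a, b) \<in> set [(u, y), (u-v+y, y), (u+v-y, y), (x, v), (x, x-u+v), (x, u+v-x), (x-y+v, v), (u, u-x+y), (k, u+v-k), (x+y-v, v), (u, x+y-u), (k+y-v, x-k+v)]" if "a + b = x + y" "a = u" for a b
  proof -
    have "a = u" "b = x+y-u" using that assms by linarith+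
    then show ?thesis by simp
  qed
  have c15: "(a, b) \<in> set [(u, y), (u-v+y, y), (u+v-y, y), (x, v), (x, x-u+v), (x, u+v-x), (x-y+v, v), (u, u-x+y), (k, u+v-k), (x+y-v, v), (u, x+y-u), (k+y-v, x-k+v)]" if "a + b = x + y" "a - b = u - v" for a b
  proof -
    have "a = k+y-v" "b = x-k+v" using that assms by linarith+
    then show ?thesis by simp
  qed
  have c16: "a + b = x + y \<Longrightarrow> a + b = u + v \<Longrightarrow> False"
    using assms(1-4) by linarith
  from hh show "(a, b) \<in> set [(u, y), (u-v+y, y), (u+v-y, y), (x, v), (x, x-u+v), (x, u+v-x), (x-y+v, v), (u, u-x+y), (k, u+v-k), (x+y-v, v), (u, x+y-u), (k+y-v, x-k+v)]"
    by (elim conjE disjE; metis c1 c2 c3 c4 c5 c6 c7 c8 c9 c10 c11 c12 c13 c14 c15 c16)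
next
  assume "(a, b) \<in> set [(u, y), (u-v+y, y), (u+v-y, y), (x, v), (x, x-u+v), (x, u+v-x), (x-y+v, v), (u, u-x+y), (k, u+v-k), (x+y-v, v), (u, x+y-u), (k+y-v, x-k+v)]"
  then consider "a = u" "b = y" | "a = u-v+y" "b = y" | "a = u+v-y" "b = y" | "a = x" "b = v" | "a = x" "b = x-u+v" | "a = x" "b = u+v-x" | "a = x-y+v" "b = v" | "a = u" "b = u-x+y" | "a = k" "b = u+v-k" | "a = x+y-v" "b = v" | "a = u" "b = x+y-u" | "a = k+y-v" "b = x-k+v" by auto
  then show "(b = y \<or> a = x \<or> a - b = x - y \<or> a + b = x + y) \<and> (b = v \<or> a = u \<or> a - b = u - v \<or> a + b = u + v)"
  proof cases
    case 1
    then have "b = y" "a = u" using assms by linarith+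
    then show ?thesis by blast
  next
    case 2
    then have "b = y" "a - b = u - v" using assms by linarith+
    then show ?thesis by blast
  next
    case 3
    then have "b = y" "a + b = u + v" using assms by linarith+
    then show ?thesis by blast
  next
    case 4
    then have "a = x" "b = v" using assms by linarith+
    then show ?thesis by blast
  next
    case 5
    then have "a = x" "a - b = u - v" using assms by linarith+
    then show ?thesis by blast
  next
    case 6
    then have "a = x" "a + b = u + v" using assms by linarith+
    then show ?thesis by blast
  next
    case 7
    then have "a - b = x - y" "b = v" using assms by linarith+
    then show ?thesis by blast
  next
    case 8
    then have "a - b = x - y" "a = u" using assms by linarith+
    then show ?thesis by blast
  next
    case 9
    then have "a - b = x - y" "a + b = u + v" using assms by linarith+
    then show ?thesis by blast
  next
    case 10
    then have "a + b = x + y" "b = v" using assms by linarith+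
    then show ?thesis by blast
  next
    case 11
    then have "a + b = x + y" "a = u" using assms by linarith+
    then show ?thesis by blast
  next
    case 12
    then have "a + b = x + y" "a - b = u - v" using assms by linarith+
    then show ?thesis by blast
  qed
qed

lemma distinct_even:
  fixes x y u v k :: int
  assumes "v \<noteq> y" "u \<noteq> x" "u - v \<noteq> x - y" "u + v \<noteq> x + y" "x - y + u + v = 2*k"
  shows "distinct [(u, y), (u-v+y, y), (u+v-y, y), (x, v), (x, x-u+v), (x, u+v-x), (x-y+v, v), (u, u-x+y), (k, u+v-k), (x+y-v, v), (u, x+y-u), (k+y-v, x-k+v)]"
  using assms by (simp; safe; linarith)

lemma set_odd:
  fixes x y u v k a b :: int
  assumes "v \<noteq> y" "u \<noteq> x" "u - v \<noteq> x - y" "u + v \<noteq> x + y" "odd (x - y + u + v)"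
  shows "((b = y \<or> a = x \<or> a - b = x - y \<or> a + b = x + y) \<and> (b = v \<or> a = u \<or> a - b = u - v \<or> a + b = u + v)) \<longleftrightarrow> (a, b) \<in> set [(u, y), (u-v+y, y), (u+v-y, y), (x, v), (x, x-u+v), (x, u+v-x), (x-y+v, v), (u, u-x+y), (x+y-v, v), (u, x+y-u)]"
proof
  assume hh: "(b = y \<or> a = x \<or> a - b = x - y \<or> a + b = x + y) \<and> (b = v \<or> a = u \<or> a - b = u - v \<or> a + b = u + v)"
  have c1: "b = y \<Longrightarrow> b = v \<Longrightarrow> False"
    using assms(1-4) by linarith
  have c2: "(a, b) \<in> set [(u, y), (u-v+y, y), (u+v-y, y), (x, v), (x, x-u+v), (x, u+v-x), (x-y+v, v), (u, u-x+y), (x+y-v, v), (u, x+y-u)]" if "b = y" "a = u" for a b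
  proof -
    have "a = u" "b = y" using that assms by linarith+
    then show ?thesis by simp
  qed
  have c3: "(a, b) \<in> set [(u, y), (u-v+y, y), (u+v-y, y), (x, v), (x, x-u+v), (x, u+v-x), (x-y+v, v), (u, u-x+y), (x+y-v, v), (u, x+y-u)]" if "b = y" "a - b = u - v" for a b
  proof -
    have "a = u-v+y" "b = y" using that assms by linarith+
    then show ?thesis by simp
  qed
  have c4: "(a, b) \<in> set [(u, y), (u-v+y, y), (u+v-y, y), (x, v), (x, x-u+v), (x, u+v-x), (x-y+v, v), (u, u-x+y), (x+y-v, v), (u, x+y-u)]" if "b = y" "a + b = u + v" for a b
  proof -
    have "a = u+v-y" "b = y" using that assms by linarith+
    then show ?thesis by simp
  qed
  have c5: "(a, b) \<in> set [(u, y), (u-v+y, y), (u+v-y, y), (x, v), (x, x-u+v), (x, u+v-x), (x-y+v, v), (u, u-x+y), (x+y-v, v), (u, x+y-u)]" if "a = x" "b = v" for a b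
  proof -
    have "a = x" "b = v" using that assms by linarith+
    then show ?thesis by simp
  qed
  have c6: "a = x \<Longrightarrow> a = u \<Longrightarrow> False"
    using assms(1-4) by linarith
  have c7: "(a, b) \<in> set [(u, y), (u-v+y, y), (u+v-y, y), (x, v), (x, x-u+v), (x, u+v-x), (x-y+v, v), (u, u-x+y), (x+y-v, v), (u, x+y-u)]" if "a = x" "a - b = u - v" for a b
  proof -
    have "a = x" "b = x-u+v" using that assms by linarith+
    then show ?thesis by simp
  qed
  have c8: "(a, b) \<in> set [(u, y), (u-v+y, y), (u+v-y, y), (x, v), (x, x-u+v), (x, u+v-x), (x-y+v, v), (u, u-x+y), (x+y-v, v), (u, x+y-u)]" if "a = x" "a + b = u + v" for a b
  proof -
    have "a = x" "b = u+v-x" using that assms by linarith+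
    then show ?thesis by simp
  qed
  have c9: "(a, b) \<in> set [(u, y), (u-v+y, y), (u+v-y, y), (x, v), (x, x-u+v), (x, u+v-x), (x-y+v, v), (u, u-x+y), (x+y-v, v), (u, x+y-u)]" if "a - b = x - y" "b = v" for a b
  proof -
    have "a = x-y+v" "b = v" using that assms by linarith+
    then show ?thesis by simp
  qed
  have c10: "(a, b) \<in> set [(u, y), (u-v+y, y), (u+v-y, y), (x, v), (x, x-u+v), (x, u+v-x), (x-y+v, v), (u, u-x+y), (x+y-v, v), (u, x+y-u)]" if "a - b = x - y" "a = u" for a b
  proof -
    have "a = u" "b = u-x+y" using that assms by linarith+
    then show ?thesis by simp
  qed
  have c11: "a - b = x - y \<Longrightarrow> a - b = u - v \<Longrightarrow> False"
    using assms(1-4) by linarith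
  have c12: "a - b = x - y \<Longrightarrow> a + b = u + v \<Longrightarrow> False"
    using assms(5) by presburger
  have c13: "(a, b) \<in> set [(u, y), (u-v+y, y), (u+v-y, y), (x, v), (x, x-u+v), (x, u+v-x), (x-y+v, v), (u, u-x+y), (x+y-v, v), (u, x+y-u)]" if "a + b = x + y" "b = v" for a b
  proof -
    have "a = x+y-v" "b = v" using that assms by linarith+
    then show ?thesis by simp
  qed
  have c14: "(a, b) \<in> set [(u, y), (u-v+y, y), (u+v-y, y), (x, v), (x, x-u+v), (x, u+v-x), (x-y+v, v), (u, u-x+y), (x+y-v, v), (u, x+y-u)]" if "a + b = x + y" "a = u" for a b
  proof -
    have "a = u" "b = x+y-u" using that assms by linarith+
    then show ?thesis by simp
  qed
  have c15: "a + b = x + y \<Longrightarrow> a - b = u - v \<Longrightarrow> False"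
    using assms(5) by presburger
  have c16: "a + b = x + y \<Longrightarrow> a + b = u + v \<Longrightarrow> False"
    using assms(1-4) by linarith
  from hh show "(a, b) \<in> set [(u, y), (u-v+y, y), (u+v-y, y), (x, v), (x, x-u+v), (x, u+v-x), (x-y+v, v), (u, u-x+y), (x+y-v, v), (u, x+y-u)]"
    by (elim conjE disjE; metis c1 c2 c3 c4 c5 c6 c7 c8 c9 c10 c11 c12 c13 c14 c15 c16)
next
  assume "(a, b) \<in> set [(u, y), (u-v+y, y), (u+v-y, y), (x, v), (x, x-u+v), (x, u+v-x), (x-y+v, v), (u, u-x+y), (x+y-v, v), (u, x+y-u)]"
  then consider "a = u" "b = y" | "a = u-v+y" "b = y" | "a = u+v-y" "b = y" | "a = x" "b = v" | "a = x" "b = x-u+v" | "a = x" "b = u+v-x" | "a = x-y+v" "b = v" | "a = u" "b = u-x+y" | "a = x+y-v" "b = v" | "a = u" "b = x+y-u" by auto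
  then show "(b = y \<or> a = x \<or> a - b = x - y \<or> a + b = x + y) \<and> (b = v \<or> a = u \<or> a - b = u - v \<or> a + b = u + v)"
  proof cases
    case 1
    then have "b = y" "a = u" using assms by linarith+
    then show ?thesis by blast
  next
    case 2
    then have "b = y" "a - b = u - v" using assms by linarith+
    then show ?thesis by blast
  next
    case 3
    then have "b = y" "a + b = u + v" using assms by linarith+
    then show ?thesis by blast
  next
    case 4
    then have "a = x" "b = v" using assms by linarith+
    then show ?thesis by blast
  next
    case 5
    then have "a = x" "a - b = u - v" using assms by linarith+
    then show ?thesis by blast
  next
    case 6
    then have "a = x" "a + b = u + v" using assms by linarith+
    then show ?thesis by blast
  next
    case 7
    then have "a - b = x - y" "b = v" using assms by linarith+
    then show ?thesis by blast
  next
    case 8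
    then have "a - b = x - y" "a = u" using assms by linarith+
    then show ?thesis by blast
  next
    case 9
    then have "a + b = x + y" "b = v" using assms by linarith+
    then show ?thesis by blast
  next
    case 10
    then have "a + b = x + y" "a = u" using assms by linarith+
    then show ?thesis by blast
  qed
qed

lemma distinct_odd:
  fixes x y u v k :: int
  assumes "v \<noteq> y" "u \<noteq> x" "u - v \<noteq> x - y" "u + v \<noteq> x + y" "odd (x - y + u + v)"
  shows "distinct [(u, y), (u-v+y, y), (u+v-y, y), (x, v), (x, x-u+v), (x, u+v-x), (x-y+v, v), (u, u-x+y), (x+y-v, v), (u, x+y-u)]"
  using assms(1-4) by (simp; safe; linarith)




lemma inter_card:
  assumes "Q' \<notin> attacks Q" "Q \<noteq> Q'"
  shows "finite (attacks Q \<inter> attacks Q') \<and>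
    card (attacks Q \<inter> attacks Q') = (if even_queen Q = even_queen Q' then 12 else 10)"
proof -
  obtain x y where Q: "Q = (x,y)" by (cases Q)
  obtain u v where Q': "Q' = (u,v)" by (cases Q')
  have h: "v \<noteq> y" "u \<noteq> x" "u - v \<noteq> x - y" "u + v \<noteq> x + y"
    using assms unfolding Q Q' attacks_char by auto
  have eq: "attacks Q \<inter> attacks Q' = {(a,b). (b = y \<or> a = x \<or> a - b = x - y \<or> a + b = x + y) \<and> (b = v \<or> a = u \<or> a - b = u - v \<or> a + b = u + v)}"
    unfolding Q Q' attacks_char using h by auto
  have par: "(even_queen Q = even_queen Q') = even (x - y + u + v)"
    unfolding Q Q' even_queen_def by simp presburger
  show ?thesis
  proof (cases "even (x - y + u + v)")
    case True
    then obtain k where k: "x - y + u + v = 2*k" by (metis evenE)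
    note S = set_even[OF h k]
    have "attacks Q \<inter> attacks Q' = set [(u, y), (u-v+y, y), (u+v-y, y), (x, v), (x, x-u+v), (x, u+v-x), (x-y+v, v), (u, u-x+y), (k, u+v-k), (x+y-v, v), (u, x+y-u), (k+y-v, x-k+v)]"
      unfolding eq using S by auto
    then show ?thesis using distinct_card[OF distinct_even[OF h k]] par True by simp
  next
    case False
    then have k: "odd (x - y + u + v)" by simp
    note S = set_odd[OF h k]
    have "attacks Q \<inter> attacks Q' = set [(u, y), (u-v+y, y), (u+v-y, y), (x, v), (x, x-u+v), (x, u+v-x), (x-y+v, v), (u, u-x+y), (x+y-v, v), (u, x+y-u)]"
      unfolding eq using S by auto
    then show ?thesis using distinct_card[OF distinct_odd[OF h k]] par False by simp
  qed
qed




lemma choose2_int: "2 * int (m choose 2) = int m * (int m - 1)"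
proof (induction m)
  case 0 then show ?case by simp
next
  case (Suc m)
  have "Suc m choose 2 = m + (m choose 2)"
    by (simp add: numeral_2_eq_2)
  then show ?case using Suc by (simp add: algebra_simps)
qed

lemma sum_ind_card: "finite A \<Longrightarrow> (\<Sum>x\<in>A. if P x then 1 else 0 :: int) = int (card {x\<in>A. P x})"
  by (simp add: sum.inter_filter[symmetric])

lemma finite_board: "finite (board n)"
  unfolding board_def I_int_def by simp

lemma board_big:
  assumes "\<bar>a\<bar> \<le> M" "\<bar>b\<bar> \<le> M" "int n \<ge> 2 * M + 2"
  shows "(a, b) \<in> board n"
proof -
  have "(2 - int n) div 2 \<le> -M" using assms by linarith
  moreover have "M \<le> int n div 2" using assms by linarith
  ultimately show ?thesis using assms unfolding board_def I_int_def by auto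
qed

lemma pair_count:
  assumes "finite C" "s \<in> S"
  shows "int (attacking_number C s) * (int (attacking_number C s) - 1) =
    (\<Sum>Q\<in>C. \<Sum>Q'\<in>C. if Q \<noteq> Q' \<and> s \<in> attacks Q \<and> s \<in> attacks Q' then 1 else 0 :: int)"
proof -
  define Cs where "Cs = {Q \<in> C. s \<in> attacks Q}"
  have fCs: "finite Cs" using assms(1) unfolding Cs_def by simp
  have inner: "(\<Sum>Q'\<in>C. if Q \<noteq> Q' \<and> s \<in> attacks Q \<and> s \<in> attacks Q' then 1 else 0 :: int)
      = (if s \<in> attacks Q then int (card Cs) - 1 else 0)" if "Q \<in> C" for Q
  proof (cases "s \<in> attacks Q")
    case True
    have "(\<Sum>Q'\<in>C. if Q \<noteq> Q' \<and> s \<in> attacks Q \<and> s \<in> attacks Q' then 1 else 0 :: int)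
        = int (card {Q'\<in>C. Q \<noteq> Q' \<and> s \<in> attacks Q \<and> s \<in> attacks Q'})"
      using assms(1) by (rule sum_ind_card)
    also have "{Q'\<in>C. Q \<noteq> Q' \<and> s \<in> attacks Q \<and> s \<in> attacks Q'} = Cs - {Q}"
      unfolding Cs_def using True by auto
    finally have A: "(\<Sum>Q'\<in>C. if Q \<noteq> Q' \<and> s \<in> attacks Q \<and> s \<in> attacks Q' then 1 else 0 :: int) = int (card (Cs - {Q}))" .
    have QC: "Q \<in> Cs" using True that unfolding Cs_def by simp
    have "card (Cs - {Q}) = card Cs - 1" using fCs QC by (simp add: card_Diff_singleton)
    moreover have "card Cs \<ge> 1" using fCs QC by (metis One_nat_def Suc_leI card_gt_0_iff empty_iff)
    ultimately have B: "int (card (Cs - {Q})) = int (card Cs) - 1" by simp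
    show ?thesis using True A B by simp
  qed simp
  have "(\<Sum>Q\<in>C. \<Sum>Q'\<in>C. if Q \<noteq> Q' \<and> s \<in> attacks Q \<and> s \<in> attacks Q' then 1 else 0 :: int)
     = (\<Sum>Q\<in>C. if s \<in> attacks Q then int (card Cs) - 1 else 0)"
    using inner by (rule sum.cong[OF refl])
  also have "\<dots> = (\<Sum>Q\<in>Cs. int (card Cs) - 1)"
    unfolding Cs_def by (simp only: sum.inter_filter[OF assms(1)])
  also have "\<dots> = int (card Cs) * (int (card Cs) - 1)" by simp
  finally show ?thesis unfolding attacking_number_def Cs_def by simp
qed




lemma gamma_sum:
  assumes fin: "finite C"
  shows "(\<Sum>Q\<in>C. \<Sum>Q'\<in>C. if Q \<noteq> Q' then (if even_queen Q = even_queen Q' then 12 else 10) else 0 :: int)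
    = 2 * gamma C"
proof -
  define E where "E = {Q \<in> C. even_queen Q}"
  define Od where "Od = {Q \<in> C. \<not> even_queen Q}"
  define e where "e = card E"
  define od where "od = card Od"
  have fE: "finite E" "finite Od" using fin unfolding E_def Od_def by auto
  have CEO: "C = E \<union> Od" "E \<inter> Od = {}" unfolding E_def Od_def by auto
  have cC: "card C = e + od" unfolding e_def od_def using CEO fE by (simp add: card_Un_disjoint)
  define cnt where "cnt Q = int (card {Q' \<in> C. even_queen Q = even_queen Q'})" for Q
  have inner: "(\<Sum>Q'\<in>C. if Q \<noteq> Q' then (if even_queen Q = even_queen Q' then 12 else 10) else 0 :: int)
     = 10 * int (card C) - 12 + 2 * cnt Q" if QC: "Q \<in> C" for Q
  proof -
    let ?g = "\<lambda>Q'. if Q \<noteq> Q' then (if even_queen Q = even_queen Q' then 12 else 10) else 0 :: int"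
    let ?f = "\<lambda>Q'. (if even_queen Q = even_queen Q' then 12 else 10) :: int"
    have "sum ?g C = ?g Q + sum ?g (C - {Q})" using sum.remove[OF fin QC] .
    also have "sum ?g (C - {Q}) = sum ?f (C - {Q})" by (rule sum.cong) auto
    also have "sum ?f C = ?f Q + sum ?f (C - {Q})" using sum.remove[OF fin QC] .
    then have "sum ?f (C - {Q}) = sum ?f C - 12" by simp
    finally have A: "sum ?g C = sum ?f C - 12" by simp
    have "sum ?f C = (\<Sum>Q'\<in>C. 10 + 2 * (if even_queen Q = even_queen Q' then 1 else 0))"
      by (rule sum.cong) auto
    also have "\<dots> = 10 * int (card C) + 2 * (\<Sum>Q'\<in>C. if even_queen Q = even_queen Q' then 1 else 0)"
      by (simp add: sum.distrib sum_distrib_left)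
    also have "(\<Sum>Q'\<in>C. if even_queen Q = even_queen Q' then 1 else 0 :: int) = cnt Q"
      unfolding cnt_def using fin by (rule sum_ind_card)
    finally show ?thesis using A by simp
  qed
  have cntE: "cnt Q = int e" if "Q \<in> C" "even_queen Q" for Q
  proof -
    have "{Q' \<in> C. even_queen Q = even_queen Q'} = E" unfolding E_def using that by auto
    then show ?thesis unfolding cnt_def e_def by simp
  qed
  have cntO: "cnt Q = int od" if "Q \<in> C" "\<not> even_queen Q" for Q
  proof -
    have "{Q' \<in> C. even_queen Q = even_queen Q'} = Od" unfolding Od_def using that by auto
    then show ?thesis unfolding cnt_def od_def by simp
  qed
  have "(\<Sum>Q\<in>C. \<Sum>Q'\<in>C. if Q \<noteq> Q' then (if even_queen Q = even_queen Q' then 12 else 10) else 0 :: int)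
     = (\<Sum>Q\<in>C. 10 * int (card C) - 12 + 2 * cnt Q)"
    using inner by (rule sum.cong[OF refl])
  also have "\<dots> = (\<Sum>Q\<in>E. 10 * int (card C) - 12 + 2 * cnt Q) + (\<Sum>Q\<in>Od. 10 * int (card C) - 12 + 2 * cnt Q)"
    using CEO fE by (simp add: sum.union_disjoint)
  also have "(\<Sum>Q\<in>E. 10 * int (card C) - 12 + 2 * cnt Q) = (\<Sum>Q\<in>E. 10 * int (card C) - 12 + 2 * int e)"
    by (rule sum.cong) (auto simp: E_def cntE)
  also have "(\<Sum>Q\<in>Od. 10 * int (card C) - 12 + 2 * cnt Q) = (\<Sum>Q\<in>Od. 10 * int (card C) - 12 + 2 * int od)"
    by (rule sum.cong) (auto simp: Od_def cntO)
  finally have L: "(\<Sum>Q\<in>C. \<Sum>Q'\<in>C. if Q \<noteq> Q' then (if even_queen Q = even_queen Q' then 12 else 10) else 0 :: int)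
     = int e * (10 * (int e + int od) - 12 + 2 * int e) + int od * (10 * (int e + int od) - 12 + 2 * int od)"
    using cC unfolding e_def od_def by simp
  have G: "2 * gamma C = 12 * (2 * int (e choose 2)) + 12 * (2 * int (od choose 2)) + 20 * int e * int od"
    unfolding gamma_def Let_def e_def od_def E_def Od_def by simp
  show ?thesis unfolding L G choose2_int by (simp add: algebra_simps)
qed




theorem mainTheorem7:
  fixes C :: "(int \<times> int) set"
  assumes "finite C" and "non_attacking C"
  shows "\<exists>N. \<forall>n\<ge>N. inloss n C = gamma C - eta n C"
proof -
  note fin = assms(1)
  have na: "Q' \<notin> attacks Q" if "Q \<in> C" "Q' \<in> C" "Q \<noteq> Q'" for Q Q'
    using assms(2) that unfolding non_attacking_def by blast
  define f where "f Q Q' = (if even_queen Q = even_queen Q' then 12 else 10 :: int)" for Q Q'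
  have IC: "finite (attacks Q \<inter> attacks Q') \<and> int (card (attacks Q \<inter> attacks Q')) = f Q Q'"
    if "Q \<in> C" "Q' \<in> C" "Q \<noteq> Q'" for Q Q'
    using inter_card[OF na[OF that] that(3)] unfolding f_def by simp
  define U where "U = (\<Union>Q\<in>C. \<Union>Q'\<in>C - {Q}. attacks Q \<inter> attacks Q')"
  have fU: "finite U" unfolding U_def
    by (rule finite_UN_I[OF fin], rule finite_UN_I) (use fin IC in auto)
  define M where "M = (\<Sum>p\<in>U. \<bar>fst p\<bar> + \<bar>snd p\<bar>)"
  have bU: "\<bar>fst p\<bar> \<le> M \<and> \<bar>snd p\<bar> \<le> M" if "p \<in> U" for p
  proof -
    have "\<bar>fst p\<bar> + \<bar>snd p\<bar> \<le> M" unfolding M_def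
      by (rule member_le_sum[OF that _ fU]) simp
    moreover have "0 \<le> \<bar>fst p\<bar>" "0 \<le> \<bar>snd p\<bar>" by simp_all
    ultimately show ?thesis by linarith
  qed
  have Uboard: "U \<subseteq> board n" if "int n \<ge> 2 * M + 2" for n
  proof
    fix p assume "p \<in> U"
    then show "p \<in> board n" using bU[of p] board_big[of "fst p" M "snd p" n] that
      by (cases p) auto
  qed
  show ?thesis
  proof (intro exI allI impI)
    fix n assume "n \<ge> nat (2 * M + 2)"
    then have nM: "int n \<ge> 2 * M + 2" by linarith
    define S where "S = attacked C \<inter> board n"
    have fS: "finite S" unfolding S_def using finite_board by simp
    let ?a = "attacking_number C"
    have sum1: "inloss n C + eta n C = (\<Sum>s\<in>S. int (?a s choose 2))"
      unfolding inloss_def eta_def S_def[symmetric] by (simp add: sum.distrib[symmetric])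
    let ?g = "\<lambda>s Q Q'. if Q \<noteq> Q' \<and> s \<in> attacks Q \<and> s \<in> attacks Q' then 1 else 0 :: int"
    have "2 * (\<Sum>s\<in>S. int (?a s choose 2)) = (\<Sum>s\<in>S. int (?a s) * (int (?a s) - 1))"
      by (simp add: sum_distrib_left choose2_int)
    also have "\<dots> = (\<Sum>s\<in>S. \<Sum>Q\<in>C. \<Sum>Q'\<in>C. ?g s Q Q')"
      by (rule sum.cong[OF refl], rule pair_count[OF fin])
    also have "\<dots> = (\<Sum>Q\<in>C. \<Sum>s\<in>S. \<Sum>Q'\<in>C. ?g s Q Q')"
      by (rule sum.swap)
    also have "\<dots> = (\<Sum>Q\<in>C. \<Sum>Q'\<in>C. \<Sum>s\<in>S. ?g s Q Q')"
      by (rule sum.cong[OF refl], rule sum.swap)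
    also have "\<dots> = (\<Sum>Q\<in>C. \<Sum>Q'\<in>C. if Q \<noteq> Q' then f Q Q' else 0)"
    proof (rule sum.cong[OF refl], rule sum.cong[OF refl])
      fix Q Q' assume QC: "Q \<in> C" and Q'C: "Q' \<in> C"
      show "(\<Sum>s\<in>S. ?g s Q Q') = (if Q \<noteq> Q' then f Q Q' else 0)"
      proof (cases "Q = Q'")
        case True then show ?thesis by simp
      next
        case False
        have "(\<Sum>s\<in>S. ?g s Q Q') = int (card {s\<in>S. Q \<noteq> Q' \<and> s \<in> attacks Q \<and> s \<in> attacks Q'})"
          using fS by (rule sum_ind_card)
        also have "{s\<in>S. Q \<noteq> Q' \<and> s \<in> attacks Q \<and> s \<in> attacks Q'} = attacks Q \<inter> attacks Q'"
        proof -
          have "attacks Q \<inter> attacks Q' \<subseteq> U" unfolding U_def using QC Q'C False by blast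
          moreover have "attacks Q \<inter> attacks Q' \<subseteq> attacked C" unfolding attacked_def using QC by blast
          ultimately show ?thesis unfolding S_def using Uboard[OF nM] False by blast
        qed
        finally show ?thesis using IC[OF QC Q'C False] False by simp
      qed
    qed
    also have "\<dots> = 2 * gamma C" unfolding f_def by (rule gamma_sum[OF fin])
    finally have "(\<Sum>s\<in>S. int (?a s choose 2)) = gamma C" by simp
    then show "inloss n C = gamma C - eta n C" using sum1 by simp
  qed
qed


end
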